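(* Suppose $F$ is a $\mu$-PL function for some $\mu>0$. Let $b\le n$ and $\eta=\rho/L$ where $0<\rho\le 1/5$ satisfies $$\frac{16n^2\rho^2}{b^3}+\rho\le 1,$$ and let $T=\lceil 6L/(\mu\rho)\rceil$. Then for every integer $K\ge1$, the output $x^K$ of PL-SAGA$(x^0,K,T,b,\eta)$ satisfies $$\mathbb E\big[F(x^K)-F(x^* )\big]\le \frac{F(x^0)-F(x^* )}{2^K},$$ where $x^*$ is an optimal solution of $\min_x F(x)$.
   Context: Setting: Let $n,d\ge 1$ be integers and $[n]=\{1,\dots,n\}$. Let $f_1,\dots,f_n:\mathbb R^d\to\mathbb R$ be differentiable (possibly nonconvex) functions, each $L$-smooth for some $L>0$, i.e. $\|\nabla f_i(x)-\nabla f_i(y)\|\le L\|x-y\|$ for all $x,y\in\mathbb R^d$ and $i\in[n]$. Let $f=\frac1n\sum_{i=1}^n f_i$. Let $h:\mathbb R^d\to\mathbb R\cup\{+\infty\}$ be proper, lower semicontinuous and convex, with closed domain. Let $F=f+h$, and let $x^*$ be a global minimizer of $F$ on $\mathbb R^d$ (assumed to exist). For $\eta>0$, $\mathrm{prox}_{\eta h}(x):=\arg\min_{y\in\mathbb R^d}\big(h(y)+\frac1{2\eta}\|y-x\|^2\big)$. $\mu$-PL functions: for $x\in\mathbb R^d$ and $\alpha>0$ define $D_h(x,\alpha):=-2\alpha\min_{y\in\mathbb R^d}\big[\langle\nabla f(x),y-x\rangle+\frac{\alpha}{2}\|y-x\|^2+h(y)-h(x)\big]$. $F$ is called $\mu$-PL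 ($\mu>0$) if $\mu\,(F(x)-F(x^* ))\le \frac12 D_h(x,\mu)$ for all $x\in\mathrm{dom}(h)$. Algorithm ProxSAGA$(x^0,T,b,\eta)$: Given $x^0\in\mathbb R^d$, positive integers $T,b$ and $\eta>0$, set $\alpha^0_i=x^0$ for all $i\in[n]$. For $t=0,1,\dots$ let $g^t=\frac1n\sum_{i=1}^n\nabla f_i(\alpha^t_i)$. For $t=0,\dots,T-1$: draw two multisets $I_t,J_t$, each consisting of $b$ indices drawn independently and uniformly at random from $[n]$ (with replacement; $I_t$, $J_t$ independent of each other and of all previous draws); set $v^t=\frac1b\sum_{i\in I_t}\big(\nabla f_i(x^t)-\nabla f_i(\alpha^t_i)\big)+g^t$ and $x^{t+1}=\mathrm{prox}_{\eta h}(x^t-\eta v^t)$; set $\alpha^{t+1}_j=x^t$ for $j\in J_t$ and $\alpha^{t+1}_j=\alpha^t_j$ for $j\notin J_t$. The output $x_a$ is chosen uniformly at random from $\{x^0,\dots,x^{T-1}\}$. Algorithm PL-SAGA$(x^0,K,T,b,\eta)$: for $k=1,\dots,K$, let $x^k$ be the output $x_a$ of ProxSAGA$(x^{k-1},T,b,\eta)$ (run with fresh independent randomness); output $x^K$. Expectations are over all randomness. *)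

theory Defs
  imports "HOL-Probability.Probability"
begin

(* Extended-valued h : R^d -> R \<union> {+\<infinity>} is modelled as h :: real^'d \<Rightarrow> ereal. *)

definition proper_fun :: "('a \<Rightarrow> ereal) \<Rightarrow> bool" where
  "proper_fun h \<longleftrightarrow> (\<exists>x. h x < \<infinity>) \<and> (\<forall>x. h x > -\<infinity>)"

definition epigraph :: "('a \<Rightarrow> ereal) \<Rightarrow> ('a \<times> real) set" where
  "epigraph h = {(x, t). h x \<le> ereal t}"

definition convex_efun :: "('a::real_vector \<Rightarrow> ereal) \<Rightarrow> bool" where
  "convex_efun h \<longleftrightarrow> convex (epigraph h)"

definition lsc_efun :: "('a::topological_space \<Rightarrow> ereal) \<Rightarrow> bool" where
  "lsc_efun h \<longleftrightarrow> closed (epigraph h)"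

definition edom :: "('a \<Rightarrow> ereal) \<Rightarrow> 'a set" where
  "edom h = {x. h x < \<infinity>}"

definition prox :: "real \<Rightarrow> ('a::real_normed_vector \<Rightarrow> ereal) \<Rightarrow> 'a \<Rightarrow> 'a" where
  "prox \<eta> h x = (SOME y. \<forall>z. h y + ereal ((norm (y - x))\<^sup>2 / (2 * \<eta>))
                               \<le> h z + ereal ((norm (z - x))\<^sup>2 / (2 * \<eta>)))"

definition Dh :: "('a::real_inner \<Rightarrow> 'a) \<Rightarrow> ('a \<Rightarrow> ereal) \<Rightarrow> 'a \<Rightarrow> real \<Rightarrow> ereal" where
  "Dh gradf h x \<alpha> = ereal (-2 * \<alpha>) *
     (INF y. ereal (inner (gradf x) (y - x) + \<alpha> / 2 * (norm (y - x))\<^sup>2) + h y - h x)"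

(* F = f + h is \<mu>-PL, with f given by value f and gradient gradf, xs a global minimizer *)
definition is_PL :: "real \<Rightarrow> ('a::real_inner \<Rightarrow> real) \<Rightarrow> ('a \<Rightarrow> 'a) \<Rightarrow> ('a \<Rightarrow> ereal) \<Rightarrow> 'a \<Rightarrow> bool" where
  "is_PL \<mu> f gradf h xs \<longleftrightarrow>
     (\<forall>x\<in>edom h. ereal \<mu> * ((ereal (f x) + h x) - (ereal (f xs) + h xs)) \<le> ereal (1/2) * Dh gradf h x \<mu>)"

fun draw_indices :: "nat \<Rightarrow> nat \<Rightarrow> nat list pmf" where
  "draw_indices n 0 = return_pmf []"
| "draw_indices n (Suc k) =
     bind_pmf (pmf_of_set {1..n}) (\<lambda>i. bind_pmf (draw_indices n k) (\<lambda>is. return_pmf (i # is)))"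

(* one iteration of ProxSAGA on state (x^t, \<alpha>^t); gf i = \<nabla> f_i *)
definition saga_step ::
  "nat \<Rightarrow> nat \<Rightarrow> real \<Rightarrow> (nat \<Rightarrow> 'a::real_normed_vector \<Rightarrow> 'a) \<Rightarrow> ('a \<Rightarrow> ereal)
   \<Rightarrow> 'a \<times> (nat \<Rightarrow> 'a) \<Rightarrow> ('a \<times> (nat \<Rightarrow> 'a)) pmf" where
  "saga_step n b \<eta> gf h s =
     (case s of (x, \<alpha>) \<Rightarrow>
       bind_pmf (draw_indices n b) (\<lambda>I. bind_pmf (draw_indices n b) (\<lambda>J.
         let g = (1 / real n) *\<^sub>R (\<Sum>i=1..n. gf i (\<alpha> i));
             v = (1 / real b) *\<^sub>R sum_list (map (\<lambda>i. gf i x - gf i (\<alpha> i)) I) + g;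
             x' = prox \<eta> h (x - \<eta> *\<^sub>R v);
             \<alpha>' = (\<lambda>j. if j \<in> set J then x else \<alpha> j)
         in return_pmf (x', \<alpha>'))))"

fun saga_iter ::
  "nat \<Rightarrow> nat \<Rightarrow> real \<Rightarrow> (nat \<Rightarrow> 'a::real_normed_vector \<Rightarrow> 'a) \<Rightarrow> ('a \<Rightarrow> ereal)
   \<Rightarrow> 'a \<Rightarrow> nat \<Rightarrow> ('a \<times> (nat \<Rightarrow> 'a)) pmf" where
  "saga_iter n b \<eta> gf h x0 0 = return_pmf (x0, \<lambda>_. x0)"
| "saga_iter n b \<eta> gf h x0 (Suc t) = bind_pmf (saga_iter n b \<eta> gf h x0 t) (saga_step n b \<eta> gf h)"

definition prox_saga ::
  "nat \<Rightarrow> (nat \<Rightarrow> 'a::real_normed_vector \<Rightarrow> 'a) \<Rightarrow> ('a \<Rightarrow> ereal)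
   \<Rightarrow> 'a \<Rightarrow> nat \<Rightarrow> nat \<Rightarrow> real \<Rightarrow> 'a pmf" where
  "prox_saga n gf h x0 T b \<eta> =
     bind_pmf (pmf_of_set {0..<T}) (\<lambda>a. map_pmf fst (saga_iter n b \<eta> gf h x0 a))"

fun pl_saga ::
  "nat \<Rightarrow> (nat \<Rightarrow> 'a::real_normed_vector \<Rightarrow> 'a) \<Rightarrow> ('a \<Rightarrow> ereal)
   \<Rightarrow> 'a \<Rightarrow> nat \<Rightarrow> nat \<Rightarrow> nat \<Rightarrow> real \<Rightarrow> 'a pmf" where
  "pl_saga n gf h x0 0 T b \<eta> = return_pmf x0"
| "pl_saga n gf h x0 (Suc k) T b \<eta> =
     bind_pmf (pl_saga n gf h x0 k T b \<eta>) (\<lambda>x. prox_saga n gf h x T b \<eta>)"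

end

theory Submission
  imports Defs
begin


lemma affine_minorant:
  fixes h :: "real^'d \<Rightarrow> ereal"
  assumes hp: "proper_fun h" and hl: "lsc_efun h" and hc: "convex_efun h"
  shows "\<exists>a c. \<forall>y. ereal (c + inner a y) \<le> h y"
proof -
  obtain x1 where x1: "h x1 < \<infinity>" using hp unfolding proper_fun_def by auto
  have "h x1 > -\<infinity>" using hp unfolding proper_fun_def by auto
  then obtain r where r: "h x1 = ereal r" using x1 by (cases "h x1") auto
  have nin: "(x1, r - 1) \<notin> epigraph h" using r by (simp add: epigraph_def)
  have cl: "closed (epigraph h)" using hl unfolding lsc_efun_def .
  have cv: "convex (epigraph h)" using hc unfolding convex_efun_def .
  obtain a b where ab: "inner a (x1, r - 1) < b" "\<forall>q\<in>epigraph h. inner a q > b"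
    using separating_hyperplane_closed_point[OF cv cl nin] by blast
  obtain a1 s where as: "a = (a1, s)" by (cases a)
  have "(x1, r) \<in> epigraph h" using r by (simp add: epigraph_def)
  then have "inner a1 x1 + s * r > b" using ab(2) as by (auto simp: inner_Pair)
  moreover have "inner a1 x1 + s * (r - 1) < b" using ab(1) as by (simp add: inner_Pair)
  ultimately have s: "s > 0" by (simp add: algebra_simps)
  have "ereal (b / s + inner (- (1/s) *\<^sub>R a1) y) \<le> h y" for y
  proof (cases "h y")
    case (real t)
    then have "(y, t) \<in> epigraph h" by (simp add: epigraph_def)
    then have "inner a1 y + s * t > b" using ab(2) as by (auto simp: inner_Pair)
    then have "b / s - inner a1 y / s < t" using s by (simp add: field_simps)
    then show ?thesis using real by (simp add: inner_minus_left)
  next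
    case PInf then show ?thesis by simp
  next
    case MInf then show ?thesis using hp unfolding proper_fun_def by (metis order_less_irrefl)
  qed
  then show ?thesis by blast
qed




lemma quad_bound:
  fixes r A D e :: real
  assumes e: "e > 0" and r: "r \<ge> 0" and A: "A \<ge> 0"
    and h: "r^2 / (2*e) - A * r \<le> D"
  shows "r \<le> 2*e*(A + \<bar>D\<bar>) + 1"
proof (rule ccontr)
  assume "\<not> ?thesis"
  then have rg: "r > 2*e*(A + \<bar>D\<bar>) + 1" by simp
  have "2*e*(A + \<bar>D\<bar>) \<ge> 0" using e A by simp
  then have r1: "r > 1" using rg by linarith
  have "r > 2*e*(A + \<bar>D\<bar>)" using rg by linarith
  then have rr: "r/(2*e) > A + \<bar>D\<bar>" using e by (simp add: field_simps)
  define X where "X = r/(2*e) - A"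
  have X: "X > \<bar>D\<bar>" using rr by (simp add: X_def)
  have "r * X > 1 * X" using r1 X by (intro mult_strict_right_mono) auto
  moreover have "r * X = r^2/(2*e) - A*r" using e by (simp add: X_def field_simps power2_eq_square)
  ultimately show False using h X by linarith
qed

lemma argmin_exists:
  fixes h :: "real^'d \<Rightarrow> ereal"
  assumes hp: "proper_fun h" and hl: "lsc_efun h" and hc: "convex_efun h" and e: "e > 0"
  shows "\<exists>y. \<forall>w. h y + ereal ((norm (y - z))\<^sup>2 / (2 * e)) \<le> h w + ereal ((norm (w - z))\<^sup>2 / (2 * e))"
proof -
  obtain a2 c0 where mn: "\<And>y. ereal (c0 + inner a2 y) \<le> h y" using affine_minorant[OF hp hl hc] by blast
  obtain x1 where x1: "h x1 < \<infinity>" using hp unfolding proper_fun_def by auto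
  have "h x1 > -\<infinity>" using hp unfolding proper_fun_def by auto
  then obtain r1 where r1: "h x1 = ereal r1" using x1 by (cases "h x1") auto
  define q where "q y = (norm (y - z))\<^sup>2 / (2 * e)" for y
  define C0 where "C0 = r1 + q x1"
  define g where "g p = snd p + q (fst p)" for p :: "(real^'d) \<times> real"
  define K where "K = epigraph h \<inter> {p. g p \<le> C0}"
  have contg: "continuous_on UNIV g" unfolding g_def q_def using e by (intro continuous_intros) auto
  have cl: "closed K" unfolding K_def
    using hl unfolding lsc_efun_def
    by (intro closed_Int) (auto intro!: closed_Collect_le contg continuous_intros)
  define D where "D = C0 - c0 + norm a2 * norm z"
  define R where "R = 2*e*(norm a2 + \<bar>D\<bar>) + 1"
  have sub: "K \<subseteq> cball z R \<times> {c0 - norm a2 * (R + norm z) .. C0}"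
  proof
    fix p assume pK: "p \<in> K"
    obtain y t where p: "p = (y, t)" by (cases p)
    have hy: "h y \<le> ereal t" using pK p by (simp add: K_def epigraph_def)
    have gt: "t + q y \<le> C0" using pK p by (simp add: K_def g_def)
    have lt: "c0 + inner a2 y \<le> t" using mn[of y] hy by (metis ereal_less_eq(3) order_trans)
    have cs: "inner a2 y \<ge> - (norm a2 * norm y)"
      using Cauchy_Schwarz_ineq2[of a2 y] by (simp add: abs_le_iff)
    have ny: "norm y \<le> norm (y - z) + norm z" by (metis norm_triangle_sub add.commute)
    have "inner a2 y \<ge> - (norm a2 * (norm (y - z) + norm z))"
      using cs ny by (smt (verit) mult_left_mono norm_ge_zero)
    then have "(norm (y - z))^2 / (2*e) - norm a2 * norm (y - z) \<le> D"
      using gt lt by (simp add: D_def q_def algebra_simps)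
    then have r: "norm (y - z) \<le> R" unfolding R_def by (intro quad_bound) (use e in auto)
    have "q y \<ge> 0" using e by (simp add: q_def)
    then have t1: "t \<le> C0" using gt by linarith
    have "- (norm a2 * (norm (y - z) + norm z)) \<ge> - (norm a2 * (R + norm z))"
      using r by (simp add: mult_left_mono)
    then have t2: "t \<ge> c0 - norm a2 * (R + norm z)"
      using lt \<open>inner a2 y \<ge> - (norm a2 * (norm (y - z) + norm z))\<close> by linarith
    show "p \<in> cball z R \<times> {c0 - norm a2 * (R + norm z) .. C0}"
      using p r t1 t2 by (simp add: dist_norm norm_minus_commute)
  qed
  have "bounded K" by (rule bounded_subset[OF _ sub]) (intro bounded_Times bounded_cball bounded_closed_interval)
  then have comp: "compact K" using cl by (simp add: compact_eq_bounded_closed)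
  have x1K: "(x1, r1) \<in> K" using r1 by (simp add: K_def epigraph_def g_def C0_def)
  obtain ps where psK: "ps \<in> K" and psm: "\<And>p. p \<in> K \<Longrightarrow> g ps \<le> g p"
    using continuous_attains_inf[OF comp _ continuous_on_subset[OF contg]] x1K by blast
  obtain ys ts where ps: "ps = (ys, ts)" by (cases ps)
  have hys: "h ys \<le> ereal ts" using psK ps by (simp add: K_def epigraph_def)
  have "h ys + ereal (q ys) \<le> h w + ereal (q w)" for w
  proof (cases "h w")
    case (real tw)
    have "ts + q ys \<le> tw + q w"
    proof (cases "tw + q w \<le> C0")
      case True
      then have "(w, tw) \<in> K" using real by (simp add: K_def epigraph_def g_def)
      then show ?thesis using psm[of "(w, tw)"] ps by (simp add: g_def)
    next
      case False
      then show ?thesis using psm[OF x1K] ps by (simp add: g_def C0_def)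
    qed
    then show ?thesis using hys real
      by (metis add_right_mono ereal_less_eq(3) order_trans plus_ereal.simps(1))
  next
    case PInf then show ?thesis using hp unfolding proper_fun_def by simp
  next
    case MInf then show ?thesis using hp unfolding proper_fun_def by (metis order_less_irrefl)
  qed
  then show ?thesis unfolding q_def by blast
qed




lemma norm_add_sq: "(norm (a + b))\<^sup>2 = (norm a)\<^sup>2 + 2 * inner a b + (norm (b::'a::real_inner))\<^sup>2"
  by (simp add: power2_norm_eq_inner inner_add_left inner_add_right inner_commute)

lemma norm_diff_sq: "(norm (a - b))\<^sup>2 = (norm a)\<^sup>2 - 2 * inner a b + (norm (b::'a::real_inner))\<^sup>2"
  by (simp add: power2_norm_eq_inner inner_diff_left inner_diff_right inner_commute)

lemma conv_fin:
  fixes h :: "real^'d \<Rightarrow> ereal"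
  assumes hc: "convex_efun h" and hx: "h x = ereal rx" and hy: "h y = ereal ry"
    and t: "0 \<le> t" "t \<le> 1"
  shows "h ((1 - t) *\<^sub>R x + t *\<^sub>R y) \<le> ereal ((1 - t) * rx + t * ry)"
proof -
  have cv: "convex (epigraph h)" using hc unfolding convex_efun_def .
  have "(x, rx) \<in> epigraph h" "(y, ry) \<in> epigraph h" using hx hy by (auto simp: epigraph_def)
  then have "(1 - t) *\<^sub>R (x, rx) + t *\<^sub>R (y, ry) \<in> epigraph h"
    using cv t unfolding convex_def by (metis diff_add_cancel diff_ge_0_iff_ge)
  then show ?thesis by (simp add: epigraph_def)
qed

lemma lim_le:
  fixes A B C :: real
  assumes "\<And>t. 0 < t \<Longrightarrow> t \<le> 1 \<Longrightarrow> A \<le> B + t * C" and "C \<ge> 0"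
  shows "A \<le> B"
proof (rule ccontr)
  assume "\<not> A \<le> B"
  define t where "t = min 1 ((A - B) / (2 * C + 1))"
  have t0: "t > 0" using \<open>\<not> A \<le> B\<close> assms(2) by (simp add: t_def)
  have "t * C \<le> (A - B) / (2 * C + 1) * C"
    using assms(2) by (intro mult_right_mono) (auto simp: t_def)
  also have "\<dots> = (A - B) * (C / (2 * C + 1))" by simp
  also have "\<dots> < (A - B) * 1"
    using \<open>\<not> A \<le> B\<close> assms(2) by (intro mult_strict_left_mono) auto
  also have "\<dots> = A - B" by simp
  finally show False using assms(1)[OF t0] by (simp add: t_def)
qed

lemma prox_min:
  fixes h :: "real^'d \<Rightarrow> ereal"
  assumes hp: "proper_fun h" and hl: "lsc_efun h" and hc: "convex_efun h" and e: "e > 0"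
  shows "h (prox e h z) + ereal ((norm (prox e h z - z))\<^sup>2 / (2 * e)) \<le> h w + ereal ((norm (w - z))\<^sup>2 / (2 * e))"
proof -
  from argmin_exists[OF hp hl hc e, of z] obtain y where
    "\<forall>w. h y + ereal ((norm (y - z))\<^sup>2 / (2 * e)) \<le> h w + ereal ((norm (w - z))\<^sup>2 / (2 * e))" by blast
  then have "\<forall>w. h (prox e h z) + ereal ((norm (prox e h z - z))\<^sup>2 / (2 * e)) \<le> h w + ereal ((norm (w - z))\<^sup>2 / (2 * e))"
    unfolding prox_def by (rule someI)
  then show ?thesis by blast
qed

lemma prox_fin:
  fixes h :: "real^'d \<Rightarrow> ereal"
  assumes hp: "proper_fun h" and hl: "lsc_efun h" and hc: "convex_efun h" and e: "e > 0"
  shows "\<bar>h (prox e h z)\<bar> \<noteq> \<infinity>"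
proof -
  obtain x1 where x1: "h x1 < \<infinity>" using hp unfolding proper_fun_def by auto
  have "h (prox e h z) + ereal ((norm (prox e h z - z))\<^sup>2 / (2 * e)) \<le> h x1 + ereal ((norm (x1 - z))\<^sup>2 / (2 * e))"
    by (rule prox_min[OF assms])
  then have "h (prox e h z) < \<infinity>" using x1 by auto
  moreover have "h (prox e h z) > -\<infinity>" using hp unfolding proper_fun_def by auto
  ultimately show ?thesis by auto
qed

lemma prox_three:
  fixes h :: "real^'d \<Rightarrow> ereal"
  assumes hp: "proper_fun h" and hl: "lsc_efun h" and hc: "convex_efun h" and e: "e > 0"
    and hw: "h w = ereal tw"
  shows "real_of_ereal (h (prox e h z)) + (norm (prox e h z - z))\<^sup>2 / (2 * e) + (norm (w - prox e h z))\<^sup>2 / (2 * e)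
         \<le> tw + (norm (w - z))\<^sup>2 / (2 * e)"
proof -
  define y where "y = prox e h z"
  obtain hy where hy: "h y = ereal hy" using prox_fin[OF hp hl hc e, of z] unfolding y_def
    by (cases "h (prox e h z)") auto
  define q where "q u = (norm (u - z))\<^sup>2 / (2 * e)" for u
  have key: "hy - tw \<le> (2 * inner (y - z) (w - y) + t * (norm (w - y))\<^sup>2) / (2 * e)"
    if t: "0 < t" "t \<le> 1" for t
  proof -
    define yt where "yt = (1 - t) *\<^sub>R y + t *\<^sub>R w"
    have c: "h yt \<le> ereal ((1 - t) * hy + t * tw)" unfolding yt_def
      by (rule conv_fin[OF hc hy hw]) (use t in auto)
    have m: "h y + ereal (q y) \<le> h yt + ereal (q yt)"
      using prox_min[OF hp hl hc e, of z yt] unfolding y_def q_def .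
    have "hy + q y \<le> (1 - t) * hy + t * tw + q yt"
    proof -
      have "ereal (hy + q y) \<le> h yt + ereal (q yt)" using m hy by simp
      also have "\<dots> \<le> ereal ((1 - t) * hy + t * tw) + ereal (q yt)" using c by (rule add_right_mono)
      finally show ?thesis by simp
    qed
    moreover have "yt - z = (y - z) + t *\<^sub>R (w - y)" by (simp add: yt_def algebra_simps)
    then have "(norm (yt - z))\<^sup>2 = (norm (y - z))\<^sup>2 + 2 * t * inner (y - z) (w - y) + t^2 * (norm (w - y))\<^sup>2"
      by (simp only: norm_add_sq) (simp add: power_mult_distrib)
    then have "q yt - q y = t * ((2 * inner (y - z) (w - y) + t * (norm (w - y))\<^sup>2) / (2 * e))"
      unfolding q_def using e by (simp add: field_simps power2_eq_square)
    ultimately have "t * (hy - tw) \<le> t * ((2 * inner (y - z) (w - y) + t * (norm (w - y))\<^sup>2) / (2 * e))"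
      by (simp add: algebra_simps)
    then show ?thesis using t by (simp only: mult_le_cancel_left_pos)
  qed
  have "hy - tw \<le> (2 * inner (y - z) (w - y)) / (2 * e)"
    by (rule lim_le[where C = "(norm (w - y))\<^sup>2 / (2 * e)"]) (use key e in \<open>auto simp: add_divide_distrib\<close>)
  moreover have "w - z = (w - y) + (y - z)" by simp
  then have "(norm (w - z))\<^sup>2 = (norm (w - y))\<^sup>2 + 2 * inner (w - y) (y - z) + (norm (y - z))\<^sup>2"
    by (metis norm_add_sq)
  moreover have "inner (w - y) (y - z) = inner (y - z) (w - y)" by (rule inner_commute)
  ultimately show ?thesis using hy e unfolding y_def[symmetric]
    by (simp add: add_divide_distrib)
qed




locale setup_f =
  fixes n :: nat and fs :: "nat \<Rightarrow> real^'d \<Rightarrow> real" and gf :: "nat \<Rightarrow> real^'d \<Rightarrow> real^'d" and L :: real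
  assumes n_pos: "n \<ge> 1" and L_pos: "L > 0"
    and grad: "\<And>i x. i \<in> {1..n} \<Longrightarrow> (fs i has_derivative (\<lambda>v. inner (gf i x) v)) (at x)"
    and smooth: "\<And>i x y. i \<in> {1..n} \<Longrightarrow> norm (gf i x - gf i y) \<le> L * norm (x - y)"
begin

definition ff where "ff x = (1 / real n) * (\<Sum>i=1..n. fs i x)"
definition G where "G x = (1 / real n) *\<^sub>R (\<Sum>i=1..n. gf i x)"

lemma ff_deriv: "(ff has_derivative (\<lambda>v. inner (G x) v)) (at x)"
proof -
  have "((\<lambda>x. \<Sum>i=1..n. fs i x) has_derivative (\<lambda>v. \<Sum>i=1..n. inner (gf i x) v)) (at x)"
    by (intro has_derivative_sum grad) auto
  then have "((\<lambda>x. (1 / real n) * (\<Sum>i=1..n. fs i x)) has_derivative (\<lambda>v. (1 / real n) * (\<Sum>i=1..n. inner (gf i x) v))) (at x)"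
    by (intro has_derivative_mult_right)
  moreover have "(\<lambda>v. (1 / real n) * (\<Sum>i=1..n. inner (gf i x) v)) = (\<lambda>v. inner (G x) v)"
    by (auto simp: G_def inner_sum_left)
  ultimately show ?thesis unfolding ff_def[abs_def] by simp
qed

lemma G_lip: "norm (G x - G y) \<le> L * norm (x - y)"
proof -
  have "G x - G y = (1 / real n) *\<^sub>R (\<Sum>i=1..n. gf i x - gf i y)"
    by (simp add: G_def sum_subtractf scaleR_diff_right)
  then have "norm (G x - G y) = (1 / real n) * norm (\<Sum>i=1..n. gf i x - gf i y)" by simp
  also have "\<dots> \<le> (1 / real n) * (\<Sum>i=1..n. norm (gf i x - gf i y))"
    by (intro mult_left_mono norm_sum) auto
  also have "\<dots> \<le> (1 / real n) * (\<Sum>i=1..n. L * norm (x - y))"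
    by (intro mult_left_mono sum_mono smooth) auto
  also have "\<dots> = L * norm (x - y)" using n_pos by simp
  finally show ?thesis .
qed

lemma descent: "ff y \<le> ff x + inner (G x) (y - x) + L / 2 * (norm (y - x))\<^sup>2"
proof -
  define d where "d = y - x"
  define \<phi> where "\<phi> t = ff (x + t *\<^sub>R d) - t * inner (G x) d - L / 2 * t^2 * (norm d)\<^sup>2" for t
  have der: "(\<phi> has_real_derivative (inner (G (x + t *\<^sub>R d)) d - inner (G x) d - L * t * (norm d)\<^sup>2)) (at t)" for t
  proof -
    have "((\<lambda>t. x + t *\<^sub>R d) has_derivative (\<lambda>s. s *\<^sub>R d)) (at t)"
      by (auto intro!: derivative_eq_intros)
    from has_derivative_compose[OF this ff_deriv]
    have "((\<lambda>t. ff (x + t *\<^sub>R d)) has_derivative (\<lambda>s. inner (G (x + t *\<^sub>R d)) (s *\<^sub>R d))) (at t)" .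
    then have "((\<lambda>t. ff (x + t *\<^sub>R d)) has_real_derivative inner (G (x + t *\<^sub>R d)) d) (at t)"
      unfolding has_field_derivative_def
    proof -
      assume a: "((\<lambda>t. ff (x + t *\<^sub>R d)) has_derivative (\<lambda>s. inner (G (x + t *\<^sub>R d)) (s *\<^sub>R d))) (at t)"
      have "(\<lambda>s. inner (G (x + t *\<^sub>R d)) (s *\<^sub>R d)) = (*) (inner (G (x + t *\<^sub>R d)) d)"
        by (rule ext) (simp add: mult.commute)
      then show "((\<lambda>t. ff (x + t *\<^sub>R d)) has_derivative (*) (inner (G (x + t *\<^sub>R d)) d)) (at t)" using a by simp
    qed
    then show ?thesis unfolding \<phi>_def[abs_def]
      by (auto intro!: derivative_eq_intros simp: power2_eq_square)
  qed
  have "\<phi> 1 \<le> \<phi> 0"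
  proof (rule DERIV_nonpos_imp_nonincreasing[of 0 1])
    fix t :: real assume t: "0 \<le> t" "t \<le> 1"
    have "inner (G (x + t *\<^sub>R d)) d - inner (G x) d = inner (G (x + t *\<^sub>R d) - G x) d"
      by (simp add: inner_diff_left)
    also have "\<dots> \<le> norm (G (x + t *\<^sub>R d) - G x) * norm d" by (rule norm_cauchy_schwarz)
    also have "\<dots> \<le> (L * norm (t *\<^sub>R d)) * norm d"
      using G_lip[of "x + t *\<^sub>R d" x] by (intro mult_right_mono) auto
    also have "\<dots> = L * t * (norm d)\<^sup>2" using t by (simp add: power2_eq_square)
    finally show "\<exists>y. (\<phi> has_real_derivative y) (at t) \<and> y \<le> 0" using der[of t] by force
  qed simp
  then show ?thesis unfolding \<phi>_def d_def by simp
qed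

end



locale setup_full = setup_f n fs gf L
  for n :: nat and fs :: "nat \<Rightarrow> real^'d \<Rightarrow> real" and gf and L +
  fixes h :: "real^'d \<Rightarrow> ereal" and \<mu> :: real and xs :: "real^'d"
  assumes h_proper: "proper_fun h" and h_lsc: "lsc_efun h" and h_convex: "convex_efun h"
    and xs_min: "\<And>x. ereal (ff xs) + h xs \<le> ereal (ff x) + h x"
    and mu_pos: "\<mu> > 0"
    and PL: "is_PL \<mu> ff G h xs"
begin

definition Fr where "Fr x = ff x + real_of_ereal (h x)"
definition Fs where "Fs = Fr xs"

lemma h_fin: "h x < \<infinity> \<Longrightarrow> h x = ereal (real_of_ereal (h x))"
  using h_proper unfolding proper_fun_def by (cases "h x") auto

lemma hxs_fin: "h xs < \<infinity>"
proof -
  obtain x1 where x1: "h x1 < \<infinity>" using h_proper unfolding proper_fun_def by auto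
  have "ereal (ff x1) + h x1 = ereal (ff x1 + real_of_ereal (h x1))" using h_fin[OF x1] by (metis plus_ereal.simps(1))
  then have "ereal (ff x1) + h x1 < \<infinity>" by simp
  then have "ereal (ff xs) + h xs < \<infinity>" using xs_min[of x1] by (rule le_less_trans[rotated])
  then show ?thesis by auto
qed

lemma Fr_ge: assumes "h x < \<infinity>" shows "Fs \<le> Fr x"
proof -
  have "ereal (ff xs) + h xs \<le> ereal (ff x) + h x" by (rule xs_min)
  then show ?thesis using h_fin[OF assms] h_fin[OF hxs_fin] unfolding Fs_def Fr_def
    by (metis ereal_less_eq(3) plus_ereal.simps(1))
qed

lemma PL_w:
  assumes hx: "h x < \<infinity>" and e: "e > 0" "e * L \<le> 1"
  shows "\<exists>w. h w < \<infinity> \<and> real_of_ereal (h w) + inner (G x) (w - x) + (norm (w - x))\<^sup>2 / (2 * e)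
             \<le> real_of_ereal (h x) - e * \<mu> * (Fr x - Fs)"
proof -
  define hx where "hx = real_of_ereal (h x)"
  have hxe: "h x = ereal hx" using h_fin[OF hx] unfolding hx_def .
  define z0 where "z0 = x - (1 / \<mu>) *\<^sub>R G x"
  define y1 where "y1 = prox (1 / \<mu>) h z0"
  have e1: "1 / \<mu> > 0" using mu_pos by simp
  obtain r1 where r1: "h y1 = ereal r1" using prox_fin[OF h_proper h_lsc h_convex e1, of z0] unfolding y1_def
    by (cases "h (prox (1 / \<mu>) h z0)") auto
  define \<phi> where "\<phi> y = inner (G x) (y - x) + \<mu> / 2 * (norm (y - x))\<^sup>2" for y
  have sq: "(norm (y - z0))\<^sup>2 / (2 * (1 / \<mu>)) = \<phi> y + (norm (G x))\<^sup>2 / (2 * \<mu>)" for y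
  proof -
    have "y - z0 = (y - x) + (1 / \<mu>) *\<^sub>R G x" by (simp add: z0_def)
    then have "(norm (y - z0))\<^sup>2 = (norm (y - x))\<^sup>2 + 2 * (1/\<mu>) * inner (y - x) (G x) + (1/\<mu>)^2 * (norm (G x))\<^sup>2"
      by (simp only: norm_add_sq) (use mu_pos in \<open>simp add: power_mult_distrib power_divide\<close>)
    then show ?thesis using mu_pos unfolding \<phi>_def by (simp add: field_simps inner_commute power2_eq_square)
  qed
  define \<psi> where "\<psi> y = ereal (inner (G x) (y - x) + \<mu> / 2 * (norm (y - x))\<^sup>2) + h y - h x" for y
  have minw: "\<psi> y1 \<le> \<psi> w" for w
  proof -
    have "h y1 + ereal ((norm (y1 - z0))\<^sup>2 / (2 * (1 / \<mu>))) \<le> h w + ereal ((norm (w - z0))\<^sup>2 / (2 * (1 / \<mu>)))"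
      unfolding y1_def by (rule prox_min[OF h_proper h_lsc h_convex e1])
    then show ?thesis unfolding \<psi>_def sq \<phi>_def using hxe r1 h_proper unfolding proper_fun_def
      by (cases "h w") auto
  qed
  have INF: "(INF y. \<psi> y) = \<psi> y1"
    by (rule antisym) (auto intro: INF_lower INF_greatest minw)
  define \<Phi>1 where "\<Phi>1 = \<phi> y1 + r1 - hx"
  have psi1: "\<psi> y1 = ereal \<Phi>1" unfolding \<psi>_def \<Phi>1_def \<phi>_def using r1 hxe by simp
  have "x \<in> edom h" using hx by (simp add: edom_def)
  then have "ereal \<mu> * ((ereal (ff x) + h x) - (ereal (ff xs) + h xs)) \<le> ereal (1/2) * Dh G h x \<mu>"
    using PL unfolding is_PL_def by blast
  then have "ereal \<mu> * ereal (Fr x - Fs) \<le> ereal (1/2) * (ereal (-2 * \<mu>) * ereal \<Phi>1)"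
  proof -
    obtain hs where hs: "h xs = ereal hs" using h_fin[OF hxs_fin] by blast
    have D: "Dh G h x \<mu> = ereal (-2 * \<mu>) * ereal \<Phi>1"
      unfolding Dh_def \<psi>_def[symmetric] INF psi1 by simp
    show ?thesis using \<open>ereal \<mu> * _ \<le> _\<close> unfolding D hxe hs
      by (simp add: Fr_def Fs_def hxe hs)
  qed
  then have "\<mu> * (Fr x - Fs) \<le> 1/2 * (-2 * \<mu> * \<Phi>1)" by simp
  then have "\<mu> * (Fr x - Fs + \<Phi>1) \<le> 0" by (simp add: algebra_simps)
  then have PLr: "Fr x - Fs \<le> - \<Phi>1" using mu_pos by (simp add: mult_le_0_iff)
  show ?thesis
  proof (cases "e * \<mu> \<le> 1")
    case True
    define l where "l = e * \<mu>"
    have l: "0 \<le> l" "l \<le> 1" using True e mu_pos by (auto simp: l_def)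
    define w where "w = (1 - l) *\<^sub>R x + l *\<^sub>R y1"
    have hw: "h w \<le> ereal ((1 - l) * hx + l * r1)" unfolding w_def by (rule conv_fin[OF h_convex hxe r1 l])
    then have hwf: "h w < \<infinity>" using le_less_trans by fastforce
    have hwr: "real_of_ereal (h w) \<le> (1 - l) * hx + l * r1"
      using hw hwf h_fin[OF hwf] by (metis ereal_less_eq(3))
    have wx: "w - x = l *\<^sub>R (y1 - x)" by (simp add: w_def algebra_simps)
    have "inner (G x) (w - x) + (norm (w - x))\<^sup>2 / (2 * e) = l * (inner (G x) (y1 - x) + \<mu> / 2 * (norm (y1 - x))\<^sup>2)"
    proof -
      have "(norm (l *\<^sub>R (y1 - x)))\<^sup>2 = l^2 * (norm (y1 - x))\<^sup>2" using l by (simp add: power_mult_distrib)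
      moreover have "l^2 / (2 * e) = l * (\<mu> / 2)" using e by (simp add: l_def power2_eq_square)
      moreover have "inner (G x) (l *\<^sub>R (y1 - x)) = l * inner (G x) (y1 - x)" by simp
      ultimately have "inner (G x) (w - x) + (norm (w - x))\<^sup>2 / (2 * e)
          = l * inner (G x) (y1 - x) + (l^2 / (2 * e)) * (norm (y1 - x))\<^sup>2" unfolding wx by simp
      also have "\<dots> = l * inner (G x) (y1 - x) + l * (\<mu> / 2) * (norm (y1 - x))\<^sup>2"
        using \<open>l^2 / (2 * e) = l * (\<mu> / 2)\<close> by (simp only:)
      finally show ?thesis by (simp add: distrib_left)
    qed
    then have "real_of_ereal (h w) + inner (G x) (w - x) + (norm (w - x))\<^sup>2 / (2 * e) \<le> hx + l * \<Phi>1"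
      using hwr unfolding \<Phi>1_def \<phi>_def by (simp add: algebra_simps)
    also have "\<dots> \<le> hx - l * (Fr x - Fs)"
    proof -
      have "l * (Fr x - Fs) \<le> l * (- \<Phi>1)" using PLr l by (intro mult_left_mono) auto
      then show ?thesis by simp
    qed
    finally show ?thesis using hwf unfolding hx_def l_def by blast
  next
    case False
    have mL: "\<mu> > L"
    proof -
      have "e * \<mu> > e * L" using False e by linarith
      then show ?thesis using e by simp
    qed
    have hy1: "h y1 < \<infinity>" using r1 by simp
    have "Fs \<le> Fr y1" by (rule Fr_ge[OF hy1])
    moreover have "ff y1 \<le> ff x + inner (G x) (y1 - x) + L / 2 * (norm (y1 - x))\<^sup>2" by (rule descent)
    ultimately have "Fs - Fr x \<le> \<Phi>1 - (\<mu> - L) / 2 * (norm (y1 - x))\<^sup>2"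
      unfolding Fr_def \<Phi>1_def \<phi>_def using r1 hxe by (simp add: field_simps inner_diff_right)
    with PLr have "(\<mu> - L) / 2 * (norm (y1 - x))\<^sup>2 \<le> 0" by linarith
    moreover have "(\<mu> - L) / 2 * (norm (y1 - x))\<^sup>2 \<ge> 0" using mL by simp
    ultimately have "(\<mu> - L) / 2 * (norm (y1 - x))\<^sup>2 = 0" by linarith
    then have "y1 = x" using mL by simp
    then have "\<Phi>1 = 0" unfolding \<Phi>1_def \<phi>_def using r1 hxe by simp
    then have "Fr x - Fs \<le> 0" using PLr by simp
    moreover have "e * \<mu> \<ge> 0" using e mu_pos by simp
    ultimately have "0 \<le> - e * \<mu> * (Fr x - Fs)" by (simp add: mult_nonneg_nonpos)
    then show ?thesis using hx unfolding hx_def by (intro exI[of _ x]) auto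
  qed
qed


lemma prox_dom: assumes "e > 0" shows "h (prox e h z) < \<infinity>"
  using prox_fin[OF h_proper h_lsc h_convex assms, of z] by auto

lemma step_det:
  fixes v :: "real^'d"
  assumes hx: "h x < \<infinity>" and e: "e > 0" "e * L \<le> 1"
  defines "x' \<equiv> prox e h (x - e *\<^sub>R v)"
  shows "Fr x' \<le> Fr x - e * \<mu> * (Fr x - Fs) + e / 2 * (norm (G x - v))\<^sup>2
                 - (1 / (2 * e) - L / 2) * (norm (x' - x))\<^sup>2"
proof -
  obtain w where hw: "h w < \<infinity>" and Pw: "real_of_ereal (h w) + inner (G x) (w - x) + (norm (w - x))\<^sup>2 / (2 * e)
             \<le> real_of_ereal (h x) - e * \<mu> * (Fr x - Fs)"
    using PL_w[OF hx e] by blast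
  define z where "z = x - e *\<^sub>R v"
  define a where "a = x' - x"
  define bb where "bb = w - x"
  have T0: "real_of_ereal (h x') + (norm (x' - z))\<^sup>2 / (2 * e) + (norm (w - x'))\<^sup>2 / (2 * e)
         \<le> real_of_ereal (h w) + (norm (w - z))\<^sup>2 / (2 * e)"
    unfolding x'_def z_def by (rule prox_three[OF h_proper h_lsc h_convex e(1) h_fin[OF hw]])
  have e1: "(norm (x' - z))\<^sup>2 = (norm a)\<^sup>2 + 2 * e * inner a v + e^2 * (norm v)\<^sup>2"
  proof -
    have "x' - z = a + e *\<^sub>R v" by (simp add: a_def z_def)
    then show ?thesis by (simp only: norm_add_sq) (use e in \<open>simp add: power_mult_distrib\<close>)
  qed
  have e2: "(norm (w - z))\<^sup>2 = (norm bb)\<^sup>2 + 2 * e * inner bb v + e^2 * (norm v)\<^sup>2"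
  proof -
    have "w - z = bb + e *\<^sub>R v" by (simp add: bb_def z_def)
    then show ?thesis by (simp only: norm_add_sq) (use e in \<open>simp add: power_mult_distrib\<close>)
  qed
  have T: "real_of_ereal (h x') + (norm a)\<^sup>2 / (2 * e) + inner a v + (norm (w - x'))\<^sup>2 / (2 * e)
         \<le> real_of_ereal (h w) + (norm bb)\<^sup>2 / (2 * e) + inner bb v"
  proof -
    have "(norm (x' - z))\<^sup>2 / (2 * e) = (norm a)\<^sup>2 / (2 * e) + inner a v + e / 2 * (norm v)\<^sup>2"
      unfolding e1 using e by (simp add: field_simps power2_eq_square)
    moreover have "(norm (w - z))\<^sup>2 / (2 * e) = (norm bb)\<^sup>2 / (2 * e) + inner bb v + e / 2 * (norm v)\<^sup>2"
      unfolding e2 using e by (simp add: field_simps power2_eq_square)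
    ultimately show ?thesis using T0 by linarith
  qed
  have D: "ff x' \<le> ff x + inner (G x) a + L / 2 * (norm a)\<^sup>2" unfolding a_def by (rule descent)
  have Y: "inner (v - G x) (bb - a) \<le> e / 2 * (norm (G x - v))\<^sup>2 + (norm (w - x'))\<^sup>2 / (2 * e)"
  proof -
    have wx: "w - x' = bb - a" by (simp add: a_def bb_def)
    have "0 \<le> (norm (e *\<^sub>R (v - G x) - (bb - a)))\<^sup>2" by simp
    also have "\<dots> = e^2 * (norm (v - G x))\<^sup>2 - 2 * e * inner (v - G x) (bb - a) + (norm (bb - a))\<^sup>2"
      by (simp only: norm_diff_sq[of "e *\<^sub>R (v - G x)" "bb - a"]) (use e in \<open>simp add: power_mult_distrib\<close>)
    finally have "2 * e * inner (v - G x) (bb - a) \<le> e^2 * (norm (v - G x))\<^sup>2 + (norm (bb - a))\<^sup>2" by simp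
    then have "inner (v - G x) (bb - a) \<le> (e^2 * (norm (v - G x))\<^sup>2 + (norm (bb - a))\<^sup>2) / (2 * e)"
      using e by (simp add: field_simps)
    also have "\<dots> = e / 2 * (norm (G x - v))\<^sup>2 + (norm (w - x'))\<^sup>2 / (2 * e)"
      unfolding wx using e by (simp add: field_simps power2_eq_square norm_minus_commute)
    finally show ?thesis .
  qed
  have Yexp: "inner (v - G x) (bb - a) = inner bb v - inner a v - inner (G x) bb + inner (G x) a"
    by (simp add: inner_diff_left inner_diff_right inner_commute)
  have Pw': "real_of_ereal (h w) + inner (G x) bb + (norm bb)\<^sup>2 / (2 * e)
             \<le> real_of_ereal (h x) - e * \<mu> * (Fr x - Fs)" using Pw by (simp add: bb_def)
  have "Fr x' \<le> Fr x - e * \<mu> * (Fr x - Fs) + e / 2 * (norm (G x - v))\<^sup>2 + L / 2 * (norm a)\<^sup>2 - (norm a)\<^sup>2 / (2 * e)"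
    unfolding Fr_def using T D Y Yexp Pw'[unfolded Fr_def] by linarith
  moreover have "(1 / (2 * e) - L / 2) * (norm a)\<^sup>2 = (norm a)\<^sup>2 / (2 * e) - L / 2 * (norm a)\<^sup>2"
    by (simp add: algebra_simps)
  ultimately show ?thesis unfolding a_def by linarith
qed

end



lemma draw_map: "draw_indices n (Suc k) = pmf_of_set {1..n} \<bind> (\<lambda>i. map_pmf (Cons i) (draw_indices n k))"
  by (simp add: map_pmf_def)

lemma draw_set: "n \<ge> 1 \<Longrightarrow> l \<in> set_pmf (draw_indices n k) \<Longrightarrow> length l = k \<and> set l \<subseteq> {1..n}"
proof (induction k arbitrary: l)
  case 0 then show ?case by simp
next
  case (Suc k)
  then show ?case unfolding draw_map by (auto simp: set_pmf_of_set dest!: Suc.IH[OF Suc.prems(1)])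
qed

lemma draw_fin: assumes "n \<ge> 1" shows "finite (set_pmf (draw_indices n k))"
proof -
  have "set_pmf (draw_indices n k) \<subseteq> {l. set l \<subseteq> {1..n} \<and> length l = k}"
    using draw_set[OF assms] by auto
  moreover have "finite {l. set l \<subseteq> {1..n} \<and> length l = k}" by (rule finite_lists_length_eq) simp
  ultimately show ?thesis by (rule finite_subset)
qed

lemma E_draw_Suc:
  fixes g :: "nat list \<Rightarrow> real"
  assumes n: "n \<ge> 1"
  shows "measure_pmf.expectation (draw_indices n (Suc k)) g
       = (\<Sum>j=1..n. measure_pmf.expectation (draw_indices n k) (\<lambda>J. g (j # J))) / real n"
proof -
  have "measure_pmf.expectation (draw_indices n (Suc k)) g
      = (\<Sum>j\<in>{1..n}. measure_pmf.expectation (map_pmf (Cons j) (draw_indices n k)) g /\<^sub>R real (card {1..n}))"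
    unfolding draw_map using n draw_fin[OF n]
    by (intro pmf_expectation_bind_pmf_of_set) auto
  also have "\<dots> = (\<Sum>j=1..n. measure_pmf.expectation (draw_indices n k) (\<lambda>J. g (j # J))) / real n"
    by (simp add: sum_divide_distrib divide_inverse_commute sum_distrib_left)
  finally show ?thesis .
qed

lemma E_notin:
  assumes n: "n \<ge> 1" and i: "i \<in> {1..n}"
  shows "measure_pmf.expectation (draw_indices n k) (\<lambda>J. if i \<in> set J then 0 else 1) = (1 - 1 / real n) ^ k"
proof (induction k)
  case 0 then show ?case by simp
next
  case (Suc k)
  have "measure_pmf.expectation (draw_indices n (Suc k)) (\<lambda>J. if i \<in> set J then 0 else 1)
      = (\<Sum>j=1..n. measure_pmf.expectation (draw_indices n k) (\<lambda>J. if i \<in> set (j # J) then 0 else 1)) / real n"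
    by (rule E_draw_Suc[OF n])
  also have "\<dots> = (\<Sum>j=1..n. if j = i then 0 else (1 - 1 / real n) ^ k) / real n"
    by (intro arg_cong[where f = "\<lambda>x. x / real n"] sum.cong) (auto simp: Suc.IH)
  also have "\<dots> = (real n - 1) * (1 - 1 / real n) ^ k / real n"
  proof -
    have "(\<Sum>j=1..n. if j = i then 0 else (1 - 1 / real n) ^ k) = (\<Sum>j\<in>{1..n} - {i}. (1 - 1 / real n) ^ k)"
      by (rule sum.mono_neutral_cong_right) auto
    also have "\<dots> = (real n - 1) * (1 - 1 / real n) ^ k" using i n by (simp add: of_nat_diff)
    finally show ?thesis by simp
  qed
  also have "\<dots> = (1 - 1 / real n) ^ Suc k" using n by (simp add: field_simps)
  finally show ?case .
qed

lemma E_var: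
  fixes Z :: "nat \<Rightarrow> real^'d"
  assumes n: "n \<ge> 1" and Z0: "(\<Sum>j=1..n. Z j) = 0"
  shows "measure_pmf.expectation (draw_indices n k) (\<lambda>J. (norm (sum_list (map Z J)))\<^sup>2)
       = real k * (\<Sum>j=1..n. (norm (Z j))\<^sup>2) / real n"
proof (induction k)
  case 0 then show ?case by simp
next
  case (Suc k)
  define P where "P = draw_indices n k"
  define S where "S J = sum_list (map Z J)" for J
  have fin: "finite (set_pmf P)" unfolding P_def by (rule draw_fin[OF n])
  have int: "integrable (measure_pmf P) f" for f :: "nat list \<Rightarrow> real"
    by (rule integrable_measure_pmf_finite[OF fin])
  have "measure_pmf.expectation (draw_indices n (Suc k)) (\<lambda>J. (norm (S J))\<^sup>2)
      = (\<Sum>j=1..n. measure_pmf.expectation P (\<lambda>J. (norm (S (j # J)))\<^sup>2)) / real n"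
    unfolding P_def by (rule E_draw_Suc[OF n])
  also have "\<dots> = (\<Sum>j=1..n. (norm (Z j))\<^sup>2 + 2 * measure_pmf.expectation P (\<lambda>J. inner (Z j) (S J))
                      + measure_pmf.expectation P (\<lambda>J. (norm (S J))\<^sup>2)) / real n"
  proof -
    have "measure_pmf.expectation P (\<lambda>J. (norm (S (j # J)))\<^sup>2)
        = (norm (Z j))\<^sup>2 + 2 * measure_pmf.expectation P (\<lambda>J. inner (Z j) (S J))
                      + measure_pmf.expectation P (\<lambda>J. (norm (S J))\<^sup>2)" for j
    proof -
      have "(\<lambda>J. (norm (S (j # J)))\<^sup>2) = (\<lambda>J. (norm (Z j))\<^sup>2 + 2 * inner (Z j) (S J) + (norm (S J))\<^sup>2)"
        by (rule ext) (simp add: S_def norm_add_sq)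
      then show ?thesis using int by (simp add: integral_add integral_mult_right)
    qed
    then show ?thesis by simp
  qed
  also have "\<dots> = ((\<Sum>j=1..n. (norm (Z j))\<^sup>2) + 2 * (\<Sum>j=1..n. measure_pmf.expectation P (\<lambda>J. inner (Z j) (S J)))
                      + real n * measure_pmf.expectation P (\<lambda>J. (norm (S J))\<^sup>2)) / real n"
    by (simp add: sum.distrib sum_distrib_left)
  also have "(\<Sum>j=1..n. measure_pmf.expectation P (\<lambda>J. inner (Z j) (S J))) = 0"
  proof -
    have "(\<Sum>j=1..n. measure_pmf.expectation P (\<lambda>J. inner (Z j) (S J)))
        = measure_pmf.expectation P (\<lambda>J. \<Sum>j=1..n. inner (Z j) (S J))"
      using int by (simp add: integral_sum)
    also have "\<dots> = 0" unfolding inner_sum_left[symmetric] Z0 by simp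
    finally show ?thesis .
  qed
  finally show ?case using Suc.IH n unfolding S_def P_def by (simp add: field_simps)
qed




lemma E_bind:
  fixes g :: "'b \<Rightarrow> real"
  assumes fp: "finite (set_pmf p)" and ff: "\<And>x. x \<in> set_pmf p \<Longrightarrow> finite (set_pmf (f x))"
  shows "measure_pmf.expectation (p \<bind> f) g = measure_pmf.expectation p (\<lambda>x. measure_pmf.expectation (f x) g)"
proof -
  have "measure_pmf.expectation (p \<bind> f) g = (\<Sum>a\<in>set_pmf p. pmf p a *\<^sub>R measure_pmf.expectation (f a) g)"
    by (rule pmf_expectation_bind[OF fp ff]) auto
  also have "\<dots> = measure_pmf.expectation p (\<lambda>x. measure_pmf.expectation (f x) g)"
    by (subst integral_measure_pmf[OF fp]) auto
  finally show ?thesis .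
qed

lemma E_mono_fin:
  fixes f g :: "'a \<Rightarrow> real"
  assumes "finite (set_pmf p)" and "\<And>x. x \<in> set_pmf p \<Longrightarrow> f x \<le> g x"
  shows "measure_pmf.expectation p f \<le> measure_pmf.expectation p g"
  using assms by (intro integral_mono_AE) (auto simp: integrable_measure_pmf_finite AE_measure_pmf_iff)

lemma bern_q:
  assumes n: "n \<ge> 1"
  shows "(1 - 1 / real n) ^ b \<le> real n / (real n + real b)"
proof -
  have "1 + real b * (1 / real n) \<le> (1 + 1 / real n) ^ b"
  proof (rule Bernoulli_inequality)
    have "0 \<le> 1 / real n" by simp
    then show "-1 \<le> 1 / real n" by linarith
  qed
  moreover have "(1 - 1 / real n) * (1 + 1 / real n) \<le> 1" by (simp add: algebra_simps)
  then have "((1 - 1 / real n) * (1 + 1 / real n)) ^ b \<le> 1"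
  proof (intro power_le_one)
    have n1: "real n \<ge> 1" using n by simp
    have "1 \<le> real n * real n" using mult_mono[OF n1 n1] by simp
    then show "0 \<le> (1 - 1 / real n) * (1 + 1 / real n)" using n1 by (simp add: field_simps)
  qed (use \<open>(1 - 1 / real n) * (1 + 1 / real n) \<le> 1\<close> in simp)
  then have p: "(1 - 1 / real n) ^ b * (1 + 1 / real n) ^ b \<le> 1" by (simp add: power_mult_distrib)
  ultimately have "(1 - 1 / real n) ^ b * (1 + real b * (1 / real n)) \<le> 1"
  proof -
    have "0 \<le> 1 - 1 / real n" using n by (simp add: field_simps)
    then have "0 \<le> (1 - 1 / real n) ^ b" by simp
    then have "(1 - 1 / real n) ^ b * (1 + real b * (1 / real n)) \<le> (1 - 1 / real n) ^ b * (1 + 1 / real n) ^ b"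
      using \<open>1 + real b * (1 / real n) \<le> (1 + 1 / real n) ^ b\<close> by (intro mult_left_mono)
    then show ?thesis using p by linarith
  qed
  then have "(1 - 1 / real n) ^ b * ((real n + real b) / real n) \<le> 1"
    using n by (simp add: field_simps)
  then show ?thesis using n by (simp add: field_simps)
qed




lemma consts_K1:
  fixes N B L \<rho> :: real
  assumes B: "1 \<le> B" "B \<le> N" and L: "L > 0" and r: "\<rho> > 0" and rc: "16 * N\<^sup>2 * \<rho>\<^sup>2 / B^3 + \<rho> \<le> 1"
  shows "(2 * N * (\<rho> / L) * L\<^sup>2 / B\<^sup>2) * (1 + 2 * N / B) \<le> 1 / (2 * (\<rho> / L)) - L / 2"
proof -
  have c: "2 * N * (\<rho> / L) * L\<^sup>2 / B\<^sup>2 = 2 * N * \<rho> * L / B\<^sup>2" using L by (simp add: power2_eq_square)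
  have Bp: "B > 0" using B by simp
  have b1: "1 + 2 * N / B \<le> 3 * N / B" using B Bp by (simp add: field_simps)
  have cp: "2 * N * \<rho> * L / B\<^sup>2 \<ge> 0" using B r L by simp
  have "(2 * N * \<rho> * L / B\<^sup>2) * (1 + 2 * N / B) \<le> (2 * N * \<rho> * L / B\<^sup>2) * (3 * N / B)"
    using b1 cp by (rule mult_left_mono)
  also have "\<dots> = L / (2 * \<rho>) * (12 * N\<^sup>2 * \<rho>\<^sup>2 / B^3)" using r Bp by (simp add: field_simps power2_eq_square power3_eq_cube)
  also have "\<dots> \<le> L / (2 * \<rho>) * (1 - \<rho>)"
  proof (rule mult_left_mono)
    have "12 * N\<^sup>2 * \<rho>\<^sup>2 / B^3 \<le> 16 * N\<^sup>2 * \<rho>\<^sup>2 / B^3" using Bp by (simp add: divide_right_mono)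
    then show "12 * N\<^sup>2 * \<rho>\<^sup>2 / B^3 \<le> 1 - \<rho>" using rc by linarith
  qed (use L r in simp)
  also have "\<dots> = 1 / (2 * (\<rho> / L)) - L / 2" using r L by (simp add: field_simps)
  finally show ?thesis unfolding c .
qed

lemma consts_K2:
  fixes N B L \<rho> q :: real
  assumes B: "1 \<le> B" "B \<le> N" and L: "L > 0" and r: "\<rho> > 0" and q: "0 \<le> q" "q \<le> N / (N + B)"
  shows "(\<rho> / L) * L\<^sup>2 / (2 * B) + (2 * N * (\<rho> / L) * L\<^sup>2 / B\<^sup>2) * (1 + 1 / (2 * N / B)) * q
         \<le> 2 * N * (\<rho> / L) * L\<^sup>2 / B\<^sup>2"
proof -
  define c where "c = 2 * N * (\<rho> / L) * L\<^sup>2 / B\<^sup>2"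
  have Bp: "B > 0" and Np: "N > 0" using B by auto
  have cp: "c \<ge> 0" unfolding c_def using Np r L by simp
  have c2: "c = 2 * N * \<rho> * L / B\<^sup>2" unfolding c_def using L by (simp add: power2_eq_square)
  have eq: "1 + 1 / (2 * N / B) = (2 * N + B) / (2 * N)" using Np Bp by (simp add: field_simps)
  have "0 \<le> c * ((2 * N + B) / (2 * N))" using cp Np Bp by simp
  then have "c * (1 + 1 / (2 * N / B)) * q \<le> c * ((2 * N + B) / (2 * N)) * (N / (N + B))"
    unfolding eq using q by (intro mult_left_mono) auto
  also have "\<dots> = c * (2 * N + B) / (2 * (N + B))"
  proof -
    have "(2 * N + B) / (2 * N) * (N / (N + B)) = ((2 * N + B) * N) / ((2 * N) * (N + B))"
      by (rule times_divide_times_eq)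
    also have "\<dots> = ((2 * N + B) * N) / ((2 * (N + B)) * N)" by (simp add: algebra_simps)
    also have "\<dots> = (2 * N + B) / (2 * (N + B))" using Np by (rule mult_divide_mult_cancel_right[OF order.strict_implies_not_eq[symmetric]])
    finally have XY: "(2 * N + B) / (2 * N) * (N / (N + B)) = (2 * N + B) / (2 * (N + B))" .
    show ?thesis by (metis XY mult.assoc times_divide_eq_right)
  qed
  also have "\<dots> = c - c * B / (2 * (N + B))"
  proof -
    have "N + B \<noteq> 0" using Np Bp by simp
    then show ?thesis by (simp add: field_simps)
  qed
  finally have A: "c * (1 + 1 / (2 * N / B)) * q \<le> c - c * B / (2 * (N + B))" .
  have "c * B / (4 * N) \<le> c * B / (2 * (N + B))"
    using cp Np Bp B by (intro divide_left_mono) (auto intro: mult_nonneg_nonneg)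
  moreover have "c * B / (4 * N) = (\<rho> / L) * L\<^sup>2 / (2 * B)"
    unfolding c2 using Np Bp L by (simp add: field_simps power2_eq_square)
  ultimately show ?thesis using A unfolding c_def by linarith
qed




lemma sum_list_map_diff_const:
  fixes W :: "nat \<Rightarrow> 'a::real_vector"
  shows "sum_list (map (\<lambda>i. W i - m) I) = sum_list (map W I) - real (length I) *\<^sub>R m"
  by (induction I) (auto simp: algebra_simps)

lemma young_vec:
  fixes a d :: "'a::real_inner"
  assumes "\<beta> > 0"
  shows "(norm (a + d))\<^sup>2 \<le> (1 + \<beta>) * (norm a)\<^sup>2 + (1 + 1 / \<beta>) * (norm d)\<^sup>2"
proof -
  have "0 \<le> (norm (\<beta> *\<^sub>R a - d))\<^sup>2" by simp
  also have "\<dots> = \<beta>^2 * (norm a)\<^sup>2 - 2 * \<beta> * inner a d + (norm d)\<^sup>2"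
    by (simp only: norm_diff_sq[of "\<beta> *\<^sub>R a" d]) (use assms in \<open>simp add: power_mult_distrib\<close>)
  finally have "2 * \<beta> * inner a d \<le> \<beta>^2 * (norm a)\<^sup>2 + (norm d)\<^sup>2" by simp
  then have "2 * inner a d \<le> \<beta> * (norm a)\<^sup>2 + (norm d)\<^sup>2 / \<beta>"
    using assms by (simp add: field_simps power2_eq_square)
  then show ?thesis by (simp add: norm_add_sq algebra_simps add_divide_distrib)
qed

context setup_f
begin

lemma EI_bound:
  fixes x :: "real^'d" and \<alpha> :: "nat \<Rightarrow> real^'d" and b :: nat
  assumes b: "b \<ge> 1"
  defines "gg \<equiv> (1 / real n) *\<^sub>R (\<Sum>i=1..n. gf i (\<alpha> i))"
  shows "measure_pmf.expectation (draw_indices n b)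
           (\<lambda>I. (norm (G x - ((1 / real b) *\<^sub>R sum_list (map (\<lambda>i. gf i x - gf i (\<alpha> i)) I) + gg)))\<^sup>2)
         \<le> L\<^sup>2 / real b * ((1 / real n) * (\<Sum>i=1..n. (norm (x - \<alpha> i))\<^sup>2))"
proof -
  define W where "W i = gf i x - gf i (\<alpha> i)" for i
  define m where "m = G x - gg"
  define Z where "Z i = W i - m" for i
  have mW: "m = (1 / real n) *\<^sub>R (\<Sum>i=1..n. W i)"
    by (simp add: m_def G_def gg_def W_def sum_subtractf scaleR_diff_right)
  have nR: "real n > 0" using n_pos by simp
  have Z0: "(\<Sum>j=1..n. Z j) = 0"
  proof -
    have "(\<Sum>j=1..n. Z j) = (\<Sum>j=1..n. W j) - real n *\<^sub>R m"
      by (simp only: Z_def sum_subtractf sum_constant_scaleR card_atLeastAtMost) simp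
    also have "\<dots> = 0" using nR by (simp add: mW)
    finally show ?thesis .
  qed
  have pw: "(norm (G x - ((1 / real b) *\<^sub>R sum_list (map W I) + gg)))\<^sup>2
        = (1 / real b)\<^sup>2 * (norm (sum_list (map Z I)))\<^sup>2" if I: "I \<in> set_pmf (draw_indices n b)" for I
  proof -
    have len: "length I = b" using draw_set[OF n_pos I] by simp
    have "sum_list (map Z I) = sum_list (map W I) - real b *\<^sub>R m"
      unfolding Z_def by (simp add: sum_list_map_diff_const len)
    then have "(1 / real b) *\<^sub>R sum_list (map Z I) = (1 / real b) *\<^sub>R sum_list (map W I) - m"
      using b by (simp add: scaleR_diff_right)
    then have "G x - ((1 / real b) *\<^sub>R sum_list (map W I) + gg) = - ((1 / real b) *\<^sub>R sum_list (map Z I))"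
      by (simp add: m_def)
    then show ?thesis by (simp add: power_mult_distrib power_divide)
  qed
  have "measure_pmf.expectation (draw_indices n b)
           (\<lambda>I. (norm (G x - ((1 / real b) *\<^sub>R sum_list (map W I) + gg)))\<^sup>2)
      = measure_pmf.expectation (draw_indices n b) (\<lambda>I. (1 / real b)\<^sup>2 * (norm (sum_list (map Z I)))\<^sup>2)"
    by (intro integral_cong_AE) (auto simp: AE_measure_pmf_iff pw)
  also have "\<dots> = (1 / real b)\<^sup>2 * (real b * (\<Sum>j=1..n. (norm (Z j))\<^sup>2) / real n)"
    by (simp add: E_var[OF n_pos Z0])
  also have "\<dots> = (\<Sum>j=1..n. (norm (Z j))\<^sup>2) / (real b * real n)"
    using b by (simp add: power2_eq_square field_simps)
  also have "\<dots> \<le> (\<Sum>j=1..n. (norm (W j))\<^sup>2) / (real b * real n)"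
  proof (rule divide_right_mono)
    have "(\<Sum>j=1..n. (norm (Z j))\<^sup>2) = (\<Sum>j=1..n. (norm (W j))\<^sup>2 - 2 * inner (W j) m + (norm m)\<^sup>2)"
      by (simp add: Z_def norm_diff_sq)
    also have "\<dots> = (\<Sum>j=1..n. (norm (W j))\<^sup>2) - 2 * inner (\<Sum>j=1..n. W j) m + real n * (norm m)\<^sup>2"
      by (simp add: sum.distrib sum_subtractf inner_sum_left sum_distrib_left)
    also have "inner (\<Sum>j=1..n. W j) m = real n * (norm m)\<^sup>2"
    proof -
      have "(\<Sum>j=1..n. W j) = real n *\<^sub>R m" using nR by (simp add: mW)
      then show ?thesis by (simp add: power2_norm_eq_inner)
    qed
    finally show "(\<Sum>j=1..n. (norm (Z j))\<^sup>2) \<le> (\<Sum>j=1..n. (norm (W j))\<^sup>2)" by simp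
  qed simp
  also have "\<dots> \<le> (\<Sum>j=1..n. L\<^sup>2 * (norm (x - \<alpha> j))\<^sup>2) / (real b * real n)"
  proof (rule divide_right_mono)
    show "(\<Sum>j=1..n. (norm (W j))\<^sup>2) \<le> (\<Sum>j=1..n. L\<^sup>2 * (norm (x - \<alpha> j))\<^sup>2)"
    proof (rule sum_mono)
      fix j assume j: "j \<in> {1..n}"
      have "norm (W j) \<le> L * norm (x - \<alpha> j)" unfolding W_def by (rule smooth[OF j])
      then have "(norm (W j))\<^sup>2 \<le> (L * norm (x - \<alpha> j))\<^sup>2" by (intro power_mono) auto
      then show "(norm (W j))\<^sup>2 \<le> L\<^sup>2 * (norm (x - \<alpha> j))\<^sup>2" by (simp add: power_mult_distrib)
    qed
  qed simp
  also have "\<dots> = L\<^sup>2 / real b * ((1 / real n) * (\<Sum>i=1..n. (norm (x - \<alpha> i))\<^sup>2))"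
    by (simp add: sum_distrib_left[symmetric] field_simps)
  finally show ?thesis unfolding W_def .
qed

end



locale setup_alg = setup_full n fs gf L h \<mu> xs
  for n :: nat and fs :: "nat \<Rightarrow> real^'d \<Rightarrow> real" and gf L h \<mu> xs +
  fixes b :: nat and \<rho> :: real
  assumes b_pos: "b \<ge> 1" and b_le: "b \<le> n" and rho_pos: "\<rho> > 0" and rho_le: "\<rho> \<le> 1/5"
    and rho_cond: "16 * (real n)\<^sup>2 * \<rho>\<^sup>2 / (real b)^3 + \<rho> \<le> 1"
begin

definition "\<eta> = \<rho> / L"
definition "cc = 2 * real n * \<eta> * L\<^sup>2 / (real b)\<^sup>2"
definition "\<beta> = 2 * real n / real b"
definition "qq = (1 - 1 / real n) ^ b"
definition "\<Gamma> s = (1 / real n) * (\<Sum>i=1..n. (norm (fst s - snd s i))\<^sup>2)"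
definition "RR s = Fr (fst s) + cc * \<Gamma> s"

lemma eta_pos: "\<eta> > 0" using rho_pos L_pos by (simp add: \<eta>_def)
lemma eta_L: "\<eta> * L \<le> 1" using rho_le L_pos by (simp add: \<eta>_def)
lemma beta_pos: "\<beta> > 0" using b_pos n_pos by (simp add: \<beta>_def)
lemma cc_nonneg: "cc \<ge> 0" using eta_pos by (simp add: cc_def)
lemma Gamma_nonneg: "\<Gamma> s \<ge> 0" by (simp add: \<Gamma>_def sum_nonneg)

lemma K1: "cc * (1 + \<beta>) \<le> 1 / (2 * \<eta>) - L / 2"
  unfolding cc_def \<beta>_def \<eta>_def
  by (rule consts_K1) (use b_pos b_le L_pos rho_pos rho_cond in auto)

lemma K2: "\<eta> * L\<^sup>2 / (2 * real b) + cc * (1 + 1 / \<beta>) * qq \<le> cc"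
  unfolding cc_def \<beta>_def \<eta>_def
  by (rule consts_K2) (use b_pos b_le L_pos rho_pos bern_q[OF n_pos, of b] n_pos in \<open>auto simp: qq_def\<close>)

lemma step_unfold:
  "saga_step n b \<eta> gf h (x, \<alpha>) =
     draw_indices n b \<bind> (\<lambda>I. draw_indices n b \<bind> (\<lambda>J.
        return_pmf (prox \<eta> h (x - \<eta> *\<^sub>R ((1 / real b) *\<^sub>R sum_list (map (\<lambda>i. gf i x - gf i (\<alpha> i)) I)
                                     + (1 / real n) *\<^sub>R (\<Sum>i=1..n. gf i (\<alpha> i)))),
                    (\<lambda>j. if j \<in> set J then x else \<alpha> j))))"
  by (simp add: saga_step_def Let_def)

lemma step_fin: "finite (set_pmf (saga_step n b \<eta> gf h s))"
proof -
  obtain x \<alpha> where s: "s = (x, \<alpha>)" by (cases s)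
  have fd: "finite (set_pmf (draw_indices n b))" by (rule draw_fin[OF n_pos])
  show ?thesis unfolding s step_unfold using fd by simp
qed

lemma step_dom:
  assumes "s' \<in> set_pmf (saga_step n b \<eta> gf h s)"
  shows "h (fst s') < \<infinity>"
proof -
  obtain x \<alpha> where s: "s = (x, \<alpha>)" by (cases s)
  show ?thesis using assms unfolding s step_unfold using prox_dom[OF eta_pos] by fastforce
qed


lemma int_draw[simp]: "integrable (measure_pmf (draw_indices n k)) (f :: nat list \<Rightarrow> real)"
  by (rule integrable_measure_pmf_finite[OF draw_fin[OF n_pos]])

lemma inner_bound:
  fixes x' x :: "real^'d" and \<alpha> :: "nat \<Rightarrow> real^'d"
  shows "measure_pmf.expectation (draw_indices n b) (\<lambda>J. RR (x', (\<lambda>j. if j \<in> set J then x else \<alpha> j)))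
         \<le> Fr x' + cc * (1 + \<beta>) * (norm (x' - x))\<^sup>2 + cc * (1 + 1 / \<beta>) * qq * \<Gamma> (x, \<alpha>)"
proof -
  define ind where "ind i J = (if i \<in> set J then 0 else 1 :: real)" for i :: nat and J
  define B where "B = (1 + \<beta>) * (norm (x' - x))\<^sup>2"
  define C where "C i = (1 + 1 / \<beta>) * (norm (x - \<alpha> i))\<^sup>2" for i
  have pw: "RR (x', (\<lambda>j. if j \<in> set J then x else \<alpha> j)) \<le> Fr x' + cc * ((1 / real n) * (\<Sum>i=1..n. B + ind i J * C i))" for J
  proof -
    have "(norm (x' - (if i \<in> set J then x else \<alpha> i)))\<^sup>2 \<le> B + ind i J * C i" for i
    proof (cases "i \<in> set J")
      case True
      have "(norm (x' - x))\<^sup>2 \<le> (1 + \<beta>) * (norm (x' - x))\<^sup>2" using beta_pos by (simp add: algebra_simps)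
      then show ?thesis using True by (simp add: B_def ind_def)
    next
      case False
      have "x' - \<alpha> i = (x' - x) + (x - \<alpha> i)" by simp
      then have "(norm (x' - \<alpha> i))\<^sup>2 \<le> (1 + \<beta>) * (norm (x' - x))\<^sup>2 + (1 + 1 / \<beta>) * (norm (x - \<alpha> i))\<^sup>2"
        using young_vec[OF beta_pos, of "x' - x" "x - \<alpha> i"] by simp
      then show ?thesis using False by (simp add: B_def C_def ind_def)
    qed
    then have "(\<Sum>i=1..n. (norm (x' - (if i \<in> set J then x else \<alpha> i)))\<^sup>2) \<le> (\<Sum>i=1..n. B + ind i J * C i)"
      by (intro sum_mono)
    then have "(1 / real n) * (\<Sum>i=1..n. (norm (x' - (if i \<in> set J then x else \<alpha> i)))\<^sup>2) \<le> (1 / real n) * (\<Sum>i=1..n. B + ind i J * C i)"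
      by (rule mult_left_mono) auto
    then have "cc * ((1 / real n) * (\<Sum>i=1..n. (norm (x' - (if i \<in> set J then x else \<alpha> i)))\<^sup>2)) \<le> cc * ((1 / real n) * (\<Sum>i=1..n. B + ind i J * C i))"
      using cc_nonneg by (rule mult_left_mono)
    then show ?thesis by (simp add: RR_def \<Gamma>_def)
  qed
  have "measure_pmf.expectation (draw_indices n b) (\<lambda>J. RR (x', (\<lambda>j. if j \<in> set J then x else \<alpha> j)))
      \<le> measure_pmf.expectation (draw_indices n b) (\<lambda>J. Fr x' + cc * ((1 / real n) * (\<Sum>i=1..n. B + ind i J * C i)))"
    by (rule E_mono_fin[OF draw_fin[OF n_pos] pw])
  also have "\<dots> = Fr x' + cc * ((1 / real n) * (\<Sum>i=1..n. B + measure_pmf.expectation (draw_indices n b) (ind i) * C i))"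
    by (simp add: integral_sum)
  also have "\<dots> = Fr x' + cc * ((1 / real n) * (\<Sum>i=1..n. B + qq * C i))"
    by (intro arg_cong[where f = "\<lambda>t. Fr x' + cc * ((1 / real n) * t)"] sum.cong refl)
       (simp add: ind_def[abs_def] E_notin[OF n_pos] qq_def)
  also have "\<dots> = Fr x' + cc * B + cc * (1 + 1 / \<beta>) * qq * \<Gamma> (x, \<alpha>)"
  proof -
    have "(\<Sum>i=1..n. B + qq * C i) = real n * B + qq * (1 + 1 / \<beta>) * (\<Sum>i=1..n. (norm (x - \<alpha> i))\<^sup>2)"
      by (simp add: sum.distrib C_def sum_distrib_left mult.assoc)
    then show ?thesis using n_pos by (simp add: \<Gamma>_def field_simps)
  qed
  finally show ?thesis by (simp add: B_def mult.assoc)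
qed


lemma step_E:
  assumes hx: "h x < \<infinity>"
  shows "measure_pmf.expectation (saga_step n b \<eta> gf h (x, \<alpha>)) RR \<le> RR (x, \<alpha>) - \<eta> * \<mu> * (Fr x - Fs)"
proof -
  define gg where "gg = (1 / real n) *\<^sub>R (\<Sum>i=1..n. gf i (\<alpha> i))"
  define vI where "vI I = (1 / real b) *\<^sub>R sum_list (map (\<lambda>i. gf i x - gf i (\<alpha> i)) I) + gg" for I
  define xI where "xI I = prox \<eta> h (x - \<eta> *\<^sub>R vI I)" for I
  define aJ where "aJ J = (\<lambda>j. if j \<in> set J then x else \<alpha> j)" for J
  have fd: "finite (set_pmf (draw_indices n b))" by (rule draw_fin[OF n_pos])
  have E1: "measure_pmf.expectation (saga_step n b \<eta> gf h (x, \<alpha>)) RR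
      = measure_pmf.expectation (draw_indices n b) (\<lambda>I. measure_pmf.expectation (draw_indices n b) (\<lambda>J. RR (xI I, aJ J)))"
  proof -
    have "saga_step n b \<eta> gf h (x, \<alpha>) = draw_indices n b \<bind> (\<lambda>I. draw_indices n b \<bind> (\<lambda>J. return_pmf (xI I, aJ J)))"
      unfolding step_unfold xI_def vI_def gg_def aJ_def ..
    then show ?thesis using fd by (simp add: E_bind)
  qed
  define K where "K = cc * (1 + 1 / \<beta>) * qq * \<Gamma> (x, \<alpha>)"
  have inner: "measure_pmf.expectation (draw_indices n b) (\<lambda>J. RR (xI I, aJ J))
      \<le> Fr x - \<eta> * \<mu> * (Fr x - Fs) + \<eta> / 2 * (norm (G x - vI I))\<^sup>2 + K" for I
  proof -
    have a: "measure_pmf.expectation (draw_indices n b) (\<lambda>J. RR (xI I, aJ J))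
        \<le> Fr (xI I) + cc * (1 + \<beta>) * (norm (xI I - x))\<^sup>2 + K"
      unfolding aJ_def K_def by (rule inner_bound)
    have b: "Fr (xI I) \<le> Fr x - \<eta> * \<mu> * (Fr x - Fs) + \<eta> / 2 * (norm (G x - vI I))\<^sup>2
                 - (1 / (2 * \<eta>) - L / 2) * (norm (xI I - x))\<^sup>2"
      unfolding xI_def by (rule step_det[OF hx eta_pos eta_L])
    have c: "cc * (1 + \<beta>) * (norm (xI I - x))\<^sup>2 \<le> (1 / (2 * \<eta>) - L / 2) * (norm (xI I - x))\<^sup>2"
      using K1 by (rule mult_right_mono) simp
    show ?thesis using a b c by linarith
  qed
  have "measure_pmf.expectation (saga_step n b \<eta> gf h (x, \<alpha>)) RR
      \<le> measure_pmf.expectation (draw_indices n b) (\<lambda>I. Fr x - \<eta> * \<mu> * (Fr x - Fs) + \<eta> / 2 * (norm (G x - vI I))\<^sup>2 + K)"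
    unfolding E1 by (rule E_mono_fin[OF fd inner])
  also have "\<dots> = Fr x - \<eta> * \<mu> * (Fr x - Fs) + \<eta> / 2 * measure_pmf.expectation (draw_indices n b) (\<lambda>I. (norm (G x - vI I))\<^sup>2) + K"
    by simp
  also have "\<dots> \<le> Fr x - \<eta> * \<mu> * (Fr x - Fs) + \<eta> / 2 * (L\<^sup>2 / real b * \<Gamma> (x, \<alpha>)) + K"
  proof -
    have "measure_pmf.expectation (draw_indices n b) (\<lambda>I. (norm (G x - vI I))\<^sup>2) \<le> L\<^sup>2 / real b * \<Gamma> (x, \<alpha>)"
      unfolding vI_def gg_def \<Gamma>_def fst_conv snd_conv by (rule EI_bound[OF b_pos])
    then have "\<eta> / 2 * measure_pmf.expectation (draw_indices n b) (\<lambda>I. (norm (G x - vI I))\<^sup>2) \<le> \<eta> / 2 * (L\<^sup>2 / real b * \<Gamma> (x, \<alpha>))"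
      using eta_pos by (intro mult_left_mono) auto
    then show ?thesis by linarith
  qed
  also have "\<dots> \<le> Fr x - \<eta> * \<mu> * (Fr x - Fs) + cc * \<Gamma> (x, \<alpha>)"
  proof -
    have "(\<eta> * L\<^sup>2 / (2 * real b) + cc * (1 + 1 / \<beta>) * qq) * \<Gamma> (x, \<alpha>) \<le> cc * \<Gamma> (x, \<alpha>)"
      using K2 Gamma_nonneg by (rule mult_right_mono)
    then show ?thesis unfolding K_def by (simp add: algebra_simps)
  qed
  also have "\<dots> = RR (x, \<alpha>) - \<eta> * \<mu> * (Fr x - Fs)" by (simp add: RR_def)
  finally show ?thesis .
qed

end



context setup_alg
begin

abbreviation "PP x0 t \<equiv> saga_iter n b \<eta> gf h x0 t"

lemma iter_fin: "finite (set_pmf (PP x0 t))"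
  by (induction t) (auto simp: step_fin)

lemma iter_dom: assumes "h x0 < \<infinity>" shows "s \<in> set_pmf (PP x0 t) \<Longrightarrow> h (fst s) < \<infinity>"
proof (induction t arbitrary: s)
  case 0 then show ?case using assms by simp
next
  case (Suc t)
  from Suc.prems obtain s0 where "s \<in> set_pmf (saga_step n b \<eta> gf h s0)" by auto
  then show ?case by (rule step_dom)
qed

lemma iter_E:
  assumes hx0: "h x0 < \<infinity>"
  shows "measure_pmf.expectation (PP x0 (Suc t)) RR
       \<le> measure_pmf.expectation (PP x0 t) RR - \<eta> * \<mu> * measure_pmf.expectation (PP x0 t) (\<lambda>s. Fr (fst s) - Fs)"
proof -
  have int: "integrable (measure_pmf (PP x0 t)) (f :: _ \<Rightarrow> real)" for f
    by (rule integrable_measure_pmf_finite[OF iter_fin])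
  have "measure_pmf.expectation (PP x0 (Suc t)) RR
      = measure_pmf.expectation (PP x0 t) (\<lambda>s. measure_pmf.expectation (saga_step n b \<eta> gf h s) RR)"
    by (simp add: E_bind iter_fin step_fin)
  also have "\<dots> \<le> measure_pmf.expectation (PP x0 t) (\<lambda>s. RR s - \<eta> * \<mu> * (Fr (fst s) - Fs))"
  proof (rule E_mono_fin[OF iter_fin])
    fix s assume s: "s \<in> set_pmf (PP x0 t)"
    obtain x \<alpha> where sx: "s = (x, \<alpha>)" by (cases s)
    have "h x < \<infinity>" using iter_dom[OF hx0 s] sx by simp
    then show "measure_pmf.expectation (saga_step n b \<eta> gf h s) RR \<le> RR s - \<eta> * \<mu> * (Fr (fst s) - Fs)"
      unfolding sx by (simp add: step_E)
  qed
  also have "\<dots> = measure_pmf.expectation (PP x0 t) RR - \<eta> * \<mu> * measure_pmf.expectation (PP x0 t) (\<lambda>s. Fr (fst s) - Fs)"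
    using int by (simp add: Bochner_Integration.integral_diff[OF int int] integral_mult_right)
  finally show ?thesis .
qed

lemma iter_sum:
  assumes hx0: "h x0 < \<infinity>"
  shows "measure_pmf.expectation (PP x0 T) RR + \<eta> * \<mu> * (\<Sum>t<T. measure_pmf.expectation (PP x0 t) (\<lambda>s. Fr (fst s) - Fs))
       \<le> Fr x0"
proof (induction T)
  case 0 then show ?case by (simp add: RR_def \<Gamma>_def)
next
  case (Suc T)
  then show ?case using iter_E[OF hx0, of T] by (simp add: algebra_simps)
qed

lemma iter_ge:
  assumes hx0: "h x0 < \<infinity>"
  shows "measure_pmf.expectation (PP x0 T) RR \<ge> Fs"
proof -
  have "measure_pmf.expectation (PP x0 T) (\<lambda>_. Fs) \<le> measure_pmf.expectation (PP x0 T) RR"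
  proof (rule E_mono_fin[OF iter_fin])
    fix s assume s: "s \<in> set_pmf (PP x0 T)"
    have "Fs \<le> Fr (fst s)" by (rule Fr_ge[OF iter_dom[OF hx0 s]])
    also have "\<dots> \<le> RR s" using cc_nonneg Gamma_nonneg[of s] by (simp add: RR_def)
    finally show "Fs \<le> RR s" .
  qed
  then show ?thesis by simp
qed

lemma iter_avg:
  assumes hx0: "h x0 < \<infinity>"
  shows "\<eta> * \<mu> * (\<Sum>t<T. measure_pmf.expectation (PP x0 t) (\<lambda>s. Fr (fst s) - Fs)) \<le> Fr x0 - Fs"
  using iter_sum[OF hx0, of T] iter_ge[OF hx0, of T] by linarith

end



context setup_alg
begin

definition "Eg x = e2ennreal ((ereal (ff x) + h x) - (ereal (ff xs) + h xs))"
definition "TT = nat \<lceil>6 * L / (\<mu> * \<rho>)\<rceil>"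

lemma Eg_fin: assumes "h x < \<infinity>" shows "Eg x = ennreal (Fr x - Fs)"
proof -
  obtain hx where hx: "h x = ereal hx" using h_fin[OF assms] by blast
  obtain hs where hs: "h xs = ereal hs" using h_fin[OF hxs_fin] by blast
  show ?thesis unfolding Eg_def Fr_def Fs_def using hx hs by (simp add: e2ennreal_ereal)
qed

lemma Eg_inf: assumes "\<not> h x < \<infinity>" shows "Eg x = \<top>"
proof -
  have "h x = \<infinity>" using assms by simp
  moreover obtain hs where hs: "h xs = ereal hs" using h_fin[OF hxs_fin] by blast
  ultimately show ?thesis unfolding Eg_def by (simp add: e2ennreal_infty)
qed

lemma TT_bound: "real TT * (\<eta> * \<mu>) \<ge> 6"
proof -
  have pos: "6 * L / (\<mu> * \<rho>) > 0" using L_pos mu_pos rho_pos by simp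
  have "real TT \<ge> 6 * L / (\<mu> * \<rho>)" unfolding TT_def using pos by linarith
  then have "real TT * (\<eta> * \<mu>) \<ge> 6 * L / (\<mu> * \<rho>) * (\<eta> * \<mu>)"
    using eta_pos mu_pos by (intro mult_right_mono) auto
  also have "6 * L / (\<mu> * \<rho>) * (\<eta> * \<mu>) = 6" using L_pos mu_pos rho_pos by (simp add: \<eta>_def)
  finally show ?thesis .
qed

lemma TT_pos: "TT > 0"
proof -
  have "6 * L / (\<mu> * \<rho>) > 0" using L_pos mu_pos rho_pos by simp
  then show ?thesis unfolding TT_def by simp
qed

lemma epoch:
  "(\<integral>\<^sup>+ x. Eg x \<partial>measure_pmf (prox_saga n gf h x0 TT b \<eta>)) \<le> Eg x0 / 2"
proof (cases "h x0 < \<infinity>")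
  case False
  then show ?thesis using Eg_inf[OF False] by (simp add: ennreal_top_divide)
next
  case hx0: True
  define Q where "Q = prox_saga n gf h x0 TT b \<eta>"
  have nonempty: "{0..<TT} \<noteq> {}" using TT_pos by simp
  have Qfin: "finite (set_pmf Q)"
    unfolding Q_def prox_saga_def using iter_fin by (simp add: set_pmf_of_set[OF nonempty])
  have Qdom: "h x < \<infinity>" if "x \<in> set_pmf Q" for x
    using that iter_dom[OF hx0] unfolding Q_def prox_saga_def by (auto simp: set_pmf_of_set[OF nonempty])
  have "(\<integral>\<^sup>+ x. Eg x \<partial>measure_pmf Q) = (\<integral>\<^sup>+ x. ennreal (Fr x - Fs) \<partial>measure_pmf Q)"
    by (intro nn_integral_cong_AE) (auto simp: AE_measure_pmf_iff intro!: Eg_fin Qdom)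
  also have "\<dots> = ennreal (measure_pmf.expectation Q (\<lambda>x. Fr x - Fs))"
    by (intro nn_integral_eq_integral integrable_measure_pmf_finite[OF Qfin])
       (auto simp: AE_measure_pmf_iff intro!: Fr_ge Qdom)
  also have "measure_pmf.expectation Q (\<lambda>x. Fr x - Fs)
      = (\<Sum>t<TT. measure_pmf.expectation (PP x0 t) (\<lambda>s. Fr (fst s) - Fs)) / real TT"
  proof -
    have "measure_pmf.expectation Q (\<lambda>x. Fr x - Fs)
        = (\<Sum>a\<in>{0..<TT}. measure_pmf.expectation (map_pmf fst (PP x0 a)) (\<lambda>x. Fr x - Fs) /\<^sub>R real (card {0..<TT}))"
      unfolding Q_def prox_saga_def using nonempty iter_fin
      by (intro pmf_expectation_bind_pmf_of_set) auto
    then show ?thesis by (simp add: atLeast0LessThan sum_divide_distrib divide_inverse_commute sum_distrib_left)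
  qed
  also have "\<dots> \<le> (Fr x0 - Fs) / 2"
  proof -
    define S where "S = (\<Sum>t<TT. measure_pmf.expectation (PP x0 t) (\<lambda>s. Fr (fst s) - Fs))"
    have a: "\<eta> * \<mu> * S \<le> Fr x0 - Fs" unfolding S_def by (rule iter_avg[OF hx0])
    have S0: "S \<ge> 0" unfolding S_def
      by (intro sum_nonneg integral_nonneg_AE) (auto simp: AE_measure_pmf_iff intro!: Fr_ge dest!: iter_dom[OF hx0])
    have "2 * S \<le> real TT * (\<eta> * \<mu>) * S" using TT_bound S0 by (intro mult_right_mono) auto
    also have "\<dots> \<le> real TT * (Fr x0 - Fs)" using a TT_pos by (simp add: mult.assoc)
    finally have "2 * S \<le> real TT * (Fr x0 - Fs)" .
    then show ?thesis using TT_pos unfolding S_def[symmetric] by (simp add: field_simps)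
  qed
  finally have "(\<integral>\<^sup>+ x. Eg x \<partial>measure_pmf Q) \<le> ennreal ((Fr x0 - Fs) / 2)" by (simp add: ennreal_leI)
  also have "\<dots> = Eg x0 / 2"
    using Fr_ge[OF hx0] by (simp add: Eg_fin[OF hx0] divide_ennreal[symmetric])
  finally show ?thesis unfolding Q_def .
qed


lemma pl_bound: "(\<integral>\<^sup>+ x. Eg x \<partial>measure_pmf (pl_saga n gf h x0 K TT b \<eta>)) \<le> Eg x0 / 2 ^ K"
proof (induction K)
  case 0 then show ?case by (simp add: divide_ennreal_def)
next
  case (Suc K)
  have "(\<integral>\<^sup>+ x. Eg x \<partial>measure_pmf (pl_saga n gf h x0 (Suc K) TT b \<eta>))
      = (\<integral>\<^sup>+ x. (\<integral>\<^sup>+ y. Eg y \<partial>measure_pmf (prox_saga n gf h x TT b \<eta>)) \<partial>measure_pmf (pl_saga n gf h x0 K TT b \<eta>))"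
    by simp
  also have "\<dots> \<le> (\<integral>\<^sup>+ x. Eg x * inverse 2 \<partial>measure_pmf (pl_saga n gf h x0 K TT b \<eta>))"
    by (intro nn_integral_mono) (simp add: epoch[unfolded divide_ennreal_def])
  also have "\<dots> = (\<integral>\<^sup>+ x. Eg x \<partial>measure_pmf (pl_saga n gf h x0 K TT b \<eta>)) * inverse 2"
    by (rule nn_integral_multc) simp
  also have "\<dots> \<le> Eg x0 / 2 ^ K * inverse 2" using Suc.IH by (rule mult_right_mono) simp
  also have "\<dots> = Eg x0 / 2 ^ Suc K"
  proof -
    have "inverse ((2::ennreal) ^ K * 2) = inverse (2 ^ K) * inverse 2"
      by (rule ennreal_inverse_mult) (auto simp: power_less_top_ennreal)
    then show ?thesis by (simp add: divide_ennreal_def mult.assoc mult.commute[of 2])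
  qed
  finally show ?case .
qed

end


theorem theorem9:
  fixes n b K :: nat
    and fs :: "nat \<Rightarrow> real^'d \<Rightarrow> real"
    and gf :: "nat \<Rightarrow> real^'d \<Rightarrow> real^'d"
    and h :: "real^'d \<Rightarrow> ereal"
    and L \<mu> \<rho> :: real
    and x0 xs :: "real^'d"
  assumes n_pos: "n \<ge> 1"
    and b_pos: "b \<ge> 1" and b_le: "b \<le> n"
    and L_pos: "L > 0"
    and grad: "\<And>i x. i \<in> {1..n} \<Longrightarrow> (fs i has_derivative (\<lambda>v. inner (gf i x) v)) (at x)"
    and smooth: "\<And>i x y. i \<in> {1..n} \<Longrightarrow> norm (gf i x - gf i y) \<le> L * norm (x - y)"
    and h_proper: "proper_fun h" and h_lsc: "lsc_efun h" and h_convex: "convex_efun h"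
    and h_dom_closed: "closed (edom h)"
    and xs_min: "\<And>x. ereal ((1 / real n) * (\<Sum>i=1..n. fs i xs)) + h xs
                      \<le> ereal ((1 / real n) * (\<Sum>i=1..n. fs i x)) + h x"
    and mu_pos: "\<mu> > 0"
    and PL: "is_PL \<mu> (\<lambda>x. (1 / real n) * (\<Sum>i=1..n. fs i x))
                     (\<lambda>x. (1 / real n) *\<^sub>R (\<Sum>i=1..n. gf i x)) h xs"
    and rho_pos: "\<rho> > 0" and rho_le: "\<rho> \<le> 1/5"
    and rho_cond: "16 * (real n)\<^sup>2 * \<rho>\<^sup>2 / (real b)^3 + \<rho> \<le> 1"
    and K_pos: "K \<ge> 1"
  shows "(\<integral>\<^sup>+ x. e2ennreal ((ereal ((1 / real n) * (\<Sum>i=1..n. fs i x)) + h x)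
                              - (ereal ((1 / real n) * (\<Sum>i=1..n. fs i xs)) + h xs))
           \<partial>measure_pmf (pl_saga n gf h x0 K (nat \<lceil>6 * L / (\<mu> * \<rho>)\<rceil>) b (\<rho> / L)))
         \<le> e2ennreal ((ereal ((1 / real n) * (\<Sum>i=1..n. fs i x0)) + h x0)
                      - (ereal ((1 / real n) * (\<Sum>i=1..n. fs i xs)) + h xs)) / 2 ^ K"
proof -
  interpret F: setup_f n fs gf L by unfold_locales (use assms in auto)
  have ffeq: "setup_f.ff n fs = (\<lambda>x. (1 / real n) * (\<Sum>i=1..n. fs i x))"
    by (rule ext) (simp add: F.ff_def)
  have Geq: "setup_f.G n gf = (\<lambda>x. (1 / real n) *\<^sub>R (\<Sum>i=1..n. gf i x))"
    by (rule ext) (simp add: F.G_def)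
  interpret A: setup_alg n fs gf L h \<mu> xs b \<rho>
  proof (unfold_locales)
    show "\<And>x. ereal (setup_f.ff n fs xs) + h xs \<le> ereal (setup_f.ff n fs x) + h x"
      unfolding ffeq using xs_min by simp
    show "is_PL \<mu> (setup_f.ff n fs) (setup_f.G n gf) h xs" unfolding ffeq Geq by (rule PL)
  qed (use assms in auto)
  show ?thesis using A.pl_bound[of x0 K] unfolding A.Eg_def A.TT_def A.\<eta>_def ffeq .
qed

end
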